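(* Let $r\geq 1$ and let $J_r$ be the $r\times r$ matrix with $1$'s on the diagonal and on the superdiagonal and $0$'s elsewhere. There exists a constant $C=C(r)$ such that if $n\geq 2$ and $x_1,\dots,x_r\in\mathbb R$ satisfy $|x_j|\leq n^{-(j-1)}$ for $1\leq j\leq r$, then $\bigl|\sum_{j=1}^r (J_r^k)_{i,j}x_j\bigr|\leq C$ for $1\leq i\leq r$ and $0\leq k<n$. On the other hand, there exists a constant $C'=C'(r)>0$ such that if $n\geq 2$ and $x_1,\dots,x_r\in\mathbb R$ satisfy $\bigl|\sum_{j=1}^r (J_r^k)_{i,j}x_j\bigr|\leq 1$ for $1\leq i\leq r$ and $0\leq k<n$, then $|x_j|\leq C' n^{-(j-1)}$ for $1\leq j\leq r$. *)

theory Defs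
  imports "Jordan_Normal_Form.Jordan_Normal_Form"
begin

text \<open>J_r is the Jordan block jordan_block r 1 (ones on diagonal and superdiagonal).
  Indices are 0-based: paper index i corresponds to i-1 here.\<close>

end

theory Submission
  imports Defs
begin

fun boxs :: "nat \<Rightarrow> nat \<Rightarrow> (nat \<Rightarrow> real) \<Rightarrow> nat \<Rightarrow> real" where
  "boxs L 0 g a = g a"
| "boxs L (Suc i) g a = (\<Sum>t<L. boxs L i g (a + t))"

lemma boxs_shift: "boxs L i (\<lambda>b. g (b + c)) a = boxs L i g (a + c)"
  by (induction i arbitrary: a) (auto simp: add_ac)

lemma boxs_diff: "boxs L i (\<lambda>b. f b - g b) a = boxs L i f a - boxs L i g a"
  by (induction i arbitrary: a) (auto simp: sum_subtractf)

lemma boxs_cong: "(\<And>b. f b = g b) \<Longrightarrow> boxs L i f a = boxs L i g a"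
  by (metis ext)

lemma boxs_sumin: "boxs L i (\<lambda>b. \<Sum>t<L. g (b + t)) a = (\<Sum>t<L. boxs L i g (a + t))"
proof (induction i arbitrary: a)
  case 0 then show ?case by simp
next
  case (Suc i)
  have "boxs L (Suc i) (\<lambda>b. \<Sum>t<L. g (b + t)) a = (\<Sum>s<L. \<Sum>t<L. boxs L i g (a + s + t))"
    apply (simp only: boxs.simps)
    apply (rule sum.cong[OF refl])
    apply (subst Suc.IH)
    apply (simp add: add_ac)
    done
  also have "\<dots> = (\<Sum>t<L. boxs L (Suc i) g (a + t))" by simp
  finally show ?case .
qed

lemma telesc:
  fixes f g :: "nat \<Rightarrow> real"
  assumes "\<And>k. f (Suc k) = f k + g k"
  shows "f (a + m) - f a = (\<Sum>t<m. g (a + t))"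
proof (induction m)
  case 0 then show ?case by simp
next
  case (Suc m)
  have "f (a + Suc m) = f (a + m) + g (a + m)" using assms[of "a + m"] by simp
  then show ?case using Suc by simp
qed

lemma boxs_approx:
  assumes "\<And>b. a \<le> b \<Longrightarrow> b \<le> a + i * L \<Longrightarrow> \<bar>g b - c\<bar> \<le> D"
  shows "\<bar>boxs L i g a - real L ^ i * c\<bar> \<le> real L ^ i * D"
  using assms
proof (induction i arbitrary: a)
  case 0
  then show ?case by simp
next
  case (Suc i)
  have IH: "\<bar>boxs L i g (a + t) - real L ^ i * c\<bar> \<le> real L ^ i * D" if "t < L" for t
    apply (rule Suc.IH)
    using Suc.prems that by auto
  have "\<bar>boxs L (Suc i) g a - real L ^ Suc i * c\<bar> = \<bar>\<Sum>t<L. (boxs L i g (a + t) - real L ^ i * c)\<bar>"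
    by (simp add: sum_subtractf)
  also have "\<dots> \<le> (\<Sum>t<L. \<bar>boxs L i g (a + t) - real L ^ i * c\<bar>)"
    by (rule sum_abs)
  also have "\<dots> \<le> (\<Sum>t<L. real L ^ i * D)"
    by (rule sum_mono) (simp add: IH)
  finally show ?case by simp
qed

lemma core:
  fixes Y :: "nat \<Rightarrow> nat \<Rightarrow> real"
  assumes rec: "\<And>i k. i < r \<Longrightarrow> Y i (Suc k) = Y i k + Y (Suc i) k"
    and top: "\<And>k. Y r k = 0"
    and bnd: "\<And>k. k < n \<Longrightarrow> \<bar>Y 0 k\<bar> \<le> 1"
    and L1: "L \<ge> 1" and Ln: "(r - 1) * L < n" and nL: "real n \<le> 2 * real r * real L"
  shows "\<And>i k. i \<le> r \<Longrightarrow> k < n \<Longrightarrow> \<bar>Y i k\<bar> \<le> 2 ^ r * (4 * real r + 1) ^ (r - i) / real L ^ i"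
proof -
  have tel: "Y i (b + L) - Y i b = (\<Sum>t<L. Y (Suc i) (b + t))" if "i < r" for i b
    using telesc[of "Y i" "Y (Suc i)" b L] rec[OF that] by auto
  have box2: "\<bar>boxs L i (Y i) a\<bar> \<le> 2 ^ i" if "i \<le> r" "a + i * L < n" for i a
    using that
  proof (induction i arbitrary: a)
    case 0 then show ?case using bnd by simp
  next
    case (Suc i)
    have eq: "boxs L (Suc i) (Y (Suc i)) a = boxs L i (Y i) (a + L) - boxs L i (Y i) a"
    proof -
      have "boxs L i (Y i) (a + L) - boxs L i (Y i) a
          = boxs L i (\<lambda>b. Y i (b + L) - Y i b) a"
        by (simp add: boxs_diff boxs_shift)
      also have "\<dots> = boxs L i (\<lambda>b. \<Sum>t<L. Y (Suc i) (b + t)) a"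
        by (rule boxs_cong) (use tel Suc.prems in auto)
      also have "\<dots> = boxs L (Suc i) (Y (Suc i)) a"
        by (simp add: boxs_sumin)
      finally show ?thesis by simp
    qed
    have "\<bar>boxs L i (Y i) (a + L)\<bar> \<le> 2 ^ i" "\<bar>boxs L i (Y i) a\<bar> \<le> 2 ^ i"
      using Suc.IH Suc.prems by (auto simp: add_ac)
    then show ?case unfolding eq by simp
  qed
  have diffb: "\<bar>Y i k - Y i b\<bar> \<le> 2 * real n * M"
    if "i < r" "k < n" "b < n" "\<And>t. t < n \<Longrightarrow> \<bar>Y (Suc i) t\<bar> \<le> M" for i k b M
  proof -
    have M0: "0 \<le> M" using that(4)[of 0] that(2) by force
    have one: "\<bar>Y i m - Y i 0\<bar> \<le> real n * M" if "m < n" for m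
    proof -
      have "Y i m - Y i 0 = (\<Sum>t<m. Y (Suc i) t)"
        using telesc[of "Y i" "Y (Suc i)" 0 m] rec[OF \<open>i < r\<close>] by auto
      also have "\<bar>\<dots>\<bar> \<le> (\<Sum>t<m. \<bar>Y (Suc i) t\<bar>)" by (rule sum_abs)
      also have "\<dots> \<le> (\<Sum>t<m. M)" by (rule sum_mono) (use that \<open>\<And>t. t < n \<Longrightarrow> \<bar>Y (Suc i) t\<bar> \<le> M\<close> in auto)
      also have "\<dots> = real m * M" by simp
      also have "\<dots> \<le> real n * M" using that M0 by (intro mult_right_mono) auto
      finally show ?thesis .
    qed
    show ?thesis using one[OF that(2)] one[OF that(3)] by linarith
  qed
  define E where "E i = 2 ^ r * (4 * real r + 1) ^ (r - i) / real L ^ i" for i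
  have Lpos: "real L > 0" using L1 by simp
  have main: "\<bar>Y (r - d) k\<bar> \<le> E (r - d)" if "d \<le> r" "k < n" for d k
    using that
  proof (induction d arbitrary: k)
    case 0 then show ?case by (simp add: top E_def)
  next
    case (Suc d)
    define i where "i = r - Suc d"
    have ir: "i < r" "Suc i = r - d" using Suc.prems unfolding i_def by auto
    have Mb: "\<And>t. t < n \<Longrightarrow> \<bar>Y (Suc i) t\<bar> \<le> E (Suc i)"
      using Suc.IH Suc.prems ir by auto
    have iL: "0 + i * L < n"
    proof -
      have "i * L \<le> (r - 1) * L" using ir(1) by (intro mult_le_mono1) auto
      then show ?thesis using Ln by (metis add_0 le_less_trans)
    qed
    have b2: "\<bar>boxs L i (Y i) 0\<bar> \<le> 2 ^ i" using box2[of i 0] ir iL by auto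
    have D: "\<bar>Y i b - Y i k\<bar> \<le> 2 * real n * E (Suc i)" if "b \<le> 0 + i * L" for b
      using diffb[where i=i and k=k and b=b and M="E (Suc i)", OF ir(1) Suc.prems(2) _ Mb] that iL by (auto simp: abs_minus_commute)
    have ap: "\<bar>boxs L i (Y i) 0 - real L ^ i * Y i k\<bar> \<le> real L ^ i * (2 * real n * E (Suc i))"
      by (rule boxs_approx) (use D in auto)
    have "real L ^ i * \<bar>Y i k\<bar> \<le> 2 ^ i + real L ^ i * (2 * real n * E (Suc i))"
      using ap b2 by (auto simp: abs_mult)
    hence "\<bar>Y i k\<bar> \<le> 2 ^ i / real L ^ i + 2 * real n * E (Suc i)"
      using Lpos by (auto simp: field_simps)
    also have "2 * real n * E (Suc i) \<le> 4 * real r * 2 ^ r * (4 * real r + 1) ^ (r - Suc i) / real L ^ i"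
    proof -
      have "2 * real n * E (Suc i) = 2 * real n * (2 ^ r * (4 * real r + 1) ^ (r - Suc i)) / (real L * real L ^ i)"
        by (simp add: E_def)
      also have "\<dots> \<le> 2 * (2 * real r * real L) * (2 ^ r * (4 * real r + 1) ^ (r - Suc i)) / (real L * real L ^ i)"
        by (intro divide_right_mono mult_right_mono mult_left_mono nL) auto
      also have "\<dots> = 4 * real r * 2 ^ r * (4 * real r + 1) ^ (r - Suc i) / real L ^ i"
        using Lpos by (simp add: field_simps)
      finally show ?thesis .
    qed
    also have "2 ^ i / real L ^ i + 4 * real r * 2 ^ r * (4 * real r + 1) ^ (r - Suc i) / real L ^ i
        \<le> E i"
    proof -
      have p1: "(2::real) ^ i \<le> 2 ^ r * (4 * real r + 1) ^ (r - Suc i)"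
      proof -
        have "(2::real) ^ i \<le> 2 ^ r" using ir by (intro power_increasing) auto
        also have "\<dots> \<le> 2 ^ r * (4 * real r + 1) ^ (r - Suc i)" by simp
        finally show ?thesis .
      qed
      have p2: "(4 * real r + 1) ^ (r - i) = (4 * real r + 1) * (4 * real r + 1) ^ (r - Suc i)"
        using ir by (metis Suc_diff_Suc power_Suc)
      have "2 ^ i + 4 * real r * 2 ^ r * (4 * real r + 1) ^ (r - Suc i) \<le> 2 ^ r * (4 * real r + 1) ^ (r - i)"
        unfolding p2 using p1 by (simp add: algebra_simps)
      then show ?thesis unfolding E_def using Lpos
        by (simp add: add_divide_distrib[symmetric] divide_right_mono)
    qed
    finally show ?case using ir by (simp add: i_def)
  qed
  fix i k assume "i \<le> r" "k < n"
  then show "\<bar>Y i k\<bar> \<le> 2 ^ r * (4 * real r + 1) ^ (r - i) / real L ^ i"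
    using main[of "r - i" k] by (simp add: E_def)
qed


lemma Jpow_entry: "i < r \<Longrightarrow> j < r \<Longrightarrow>
   ((jordan_block r (1::real)) ^\<^sub>m k) $$ (i, j) = (if i \<le> j then real (k choose (j - i)) else 0)"
  by (simp add: jordan_block_pow)

definition YY :: "nat \<Rightarrow> (nat \<Rightarrow> real) \<Rightarrow> nat \<Rightarrow> nat \<Rightarrow> real" where
  "YY r x i k = (\<Sum>j<r. (if i \<le> j then real (k choose (j - i)) else 0) * x j)"

lemma YY_rec: "YY r x i (Suc k) = YY r x i k + YY r x (Suc i) k"
proof -
  have "(if i \<le> j then real (Suc k choose (j - i)) else 0) =
        (if i \<le> j then real (k choose (j - i)) else 0) + (if Suc i \<le> j then real (k choose (j - Suc i)) else 0)" for j
  proof (cases "i < j")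
    case True
    then have "j - i = Suc (j - Suc i)" by simp
    then show ?thesis using True by simp
  next
    case False then show ?thesis by auto
  qed
  then show ?thesis unfolding YY_def by (simp add: sum.distrib distrib_right)
qed

lemma YY_top: "YY r x r k = 0"
  unfolding YY_def by (intro sum.neutral) auto

lemma YY_0: "i < r \<Longrightarrow> YY r x i 0 = x i"
  unfolding YY_def
  by (subst sum.remove[of _ i]) (auto intro!: sum.neutral split: if_splits)

theorem lemmaB2:
  fixes r :: nat
  assumes "r \<ge> 1"
  shows "(\<exists>C::real. \<forall>(n::nat) (x::nat \<Rightarrow> real). n \<ge> 2 \<longrightarrow>
            (\<forall>j<r. \<bar>x j\<bar> \<le> 1 / real n ^ j) \<longrightarrow>
            (\<forall>i<r. \<forall>k<n. \<bar>\<Sum>j<r. ((jordan_block r (1::real)) ^\<^sub>m k) $$ (i, j) * x j\<bar> \<le> C))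
       \<and> (\<exists>C'::real. C' > 0 \<and> (\<forall>(n::nat) (x::nat \<Rightarrow> real). n \<ge> 2 \<longrightarrow>
            (\<forall>i<r. \<forall>k<n. \<bar>\<Sum>j<r. ((jordan_block r (1::real)) ^\<^sub>m k) $$ (i, j) * x j\<bar> \<le> 1) \<longrightarrow>
            (\<forall>j<r. \<bar>x j\<bar> \<le> C' / real n ^ j)))"
proof -
  have eqY: "(\<Sum>j<r. ((jordan_block r (1::real)) ^\<^sub>m k) $$ (i, j) * x j) = YY r x i k" if "i < r" for i k x
    unfolding YY_def using that by (intro sum.cong) (auto simp: Jpow_entry)
  have part1: "\<bar>YY r x i k\<bar> \<le> real r"
    if n2: "n \<ge> 2" and xb: "\<forall>j<r. \<bar>x j\<bar> \<le> 1 / real n ^ j" and "k < n" for n x i k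
  proof -
    have "\<bar>(if i \<le> j then real (k choose (j - i)) else 0) * x j\<bar> \<le> 1" if "j < r" for j
    proof (cases "i \<le> j")
      case True
      have np: "real n > 0" using n2 by simp
      have "real (k choose (j - i)) \<le> real n ^ (j - i)"
      proof -
        have "k choose (j - i) \<le> k ^ (j - i)"
          by (cases "j - i \<le> k") (auto intro: binomial_le_pow simp: binomial_eq_0)
        also have "\<dots> \<le> n ^ (j - i)" using \<open>k < n\<close> by (intro power_mono) auto
        finally show ?thesis by (metis of_nat_le_iff of_nat_power)
      qed
      moreover have "\<bar>x j\<bar> \<le> 1 / real n ^ j" using xb that by auto
      ultimately have "real (k choose (j - i)) * \<bar>x j\<bar> \<le> real n ^ (j - i) * (1 / real n ^ j)"
        by (intro mult_mono) auto
      also have "\<dots> = 1 / real n ^ i"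
        using True np by (simp add: power_diff field_simps)
      also have "\<dots> \<le> 1" using n2 by simp
      finally show ?thesis using True by (simp add: abs_mult)
    qed simp
    then have "(\<Sum>j<r. \<bar>(if i \<le> j then real (k choose (j - i)) else 0) * x j\<bar>) \<le> (\<Sum>j<r. 1)"
      by (intro sum_mono) auto
    then show ?thesis unfolding YY_def
      using order_trans[OF sum_abs[of "\<lambda>j. (if i \<le> j then real (k choose (j - i)) else 0) * x j" "{..<r}"]]
      by simp
  qed
  define C' where "C' = max (real r ^ r) (2 ^ r * (4 * real r + 1) ^ r * (2 * real r) ^ r)"
  have C'pos: "C' > 0" using assms unfolding C'_def by (simp add: less_max_iff_disj)
  have part2: "\<bar>x j\<bar> \<le> C' / real n ^ j"
    if n2: "n \<ge> 2" and yb: "\<forall>i<r. \<forall>k<n. \<bar>YY r x i k\<bar> \<le> 1" and "j < r" for n x j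
  proof (cases "n < r")
    case True
    have "\<bar>x j\<bar> \<le> 1" using yb \<open>j < r\<close> n2 YY_0[OF \<open>j < r\<close>, of x] by force
    moreover have "real n ^ j \<le> real r ^ r"
    proof -
      have "real n ^ j \<le> real r ^ j" using True by (intro power_mono) auto
      also have "\<dots> \<le> real r ^ r" using \<open>j < r\<close> assms by (intro power_increasing) auto
      finally show ?thesis .
    qed
    moreover have "real r ^ r \<le> C'" unfolding C'_def by simp
    moreover have "real n ^ j > 0" using n2 by simp
    ultimately have "\<bar>x j\<bar> * real n ^ j \<le> C'"
    proof -
      assume a: "\<bar>x j\<bar> \<le> 1" "real n ^ j \<le> real r ^ r" "real r ^ r \<le> C'" "real n ^ j > 0"
      have "\<bar>x j\<bar> * real n ^ j \<le> 1 * real n ^ j"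
        using a(1,4) by (intro mult_right_mono) auto
      then show ?thesis using a(2,3) by linarith
    qed
    then show ?thesis using \<open>real n ^ j > 0\<close> by (simp add: field_simps)
  next
    case False
    define L where "L = n div r"
    have L1: "L \<ge> 1" using False assms div_le_mono[of r n r] unfolding L_def by simp
    have rL: "r * L \<le> n" unfolding L_def by simp
    have Ln: "(r - 1) * L < n"
    proof -
      have "(r - 1) * L + L = r * L" using assms by (metis Suc_diff_1 le_less_trans less_one mult_Suc not_le add.commute le_numeral_extra(4))
      then show ?thesis using rL L1 by linarith
    qed
    have nL: "real n \<le> 2 * real r * real L"
    proof -
      have "n < r * (L + 1)" unfolding L_def using assms
        by (metis add.commute div_mult_mod_eq mod_less_divisor mult.commute mult_Suc_right nat_add_left_cancel_less not_one_le_zero zero_less_iff_neq_zero plus_1_eq_Suc)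
      also have "\<dots> \<le> 2 * r * L" using L1 by (simp add: algebra_simps)
      finally show ?thesis by (metis of_nat_le_iff of_nat_mult of_nat_numeral less_imp_le)
    qed
    have cb: "\<bar>YY r x j 0\<bar> \<le> 2 ^ r * (4 * real r + 1) ^ (r - j) / real L ^ j"
      by (rule core[where Y="YY r x" and n=n and L=L and r=r])
        (use YY_rec YY_top yb assms L1 Ln nL n2 \<open>j < r\<close> in auto)
    have Lp: "real L > 0" using L1 by simp
    have np: "real n > 0" using n2 by simp
    have "1 / real L ^ j \<le> (2 * real r) ^ r / real n ^ j"
    proof -
      have "real n ^ j \<le> (2 * real r * real L) ^ j" using nL by (intro power_mono) auto
      also have "\<dots> = (2 * real r) ^ j * real L ^ j" by (simp add: power_mult_distrib)
      also have "\<dots> \<le> (2 * real r) ^ r * real L ^ j"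
        using \<open>j < r\<close> assms by (intro mult_right_mono power_increasing) auto
      finally show ?thesis using Lp np by (simp add: field_simps)
    qed
    have "\<bar>x j\<bar> \<le> 2 ^ r * (4 * real r + 1) ^ (r - j) * (1 / real L ^ j)"
      using cb YY_0[OF \<open>j < r\<close>] by simp
    also have "\<dots> \<le> 2 ^ r * (4 * real r + 1) ^ r * ((2 * real r) ^ r / real n ^ j)"
      by (intro mult_mono power_increasing \<open>1 / real L ^ j \<le> _\<close>) auto
    also have "\<dots> = (2 ^ r * (4 * real r + 1) ^ r * (2 * real r) ^ r) / real n ^ j" by simp
    also have "\<dots> \<le> C' / real n ^ j"
      unfolding C'_def using np by (intro divide_right_mono) auto
    finally show ?thesis .
  qed
  show ?thesis
  proof
    show "\<exists>C::real. \<forall>(n::nat) (x::nat \<Rightarrow> real). n \<ge> 2 \<longrightarrow>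
            (\<forall>j<r. \<bar>x j\<bar> \<le> 1 / real n ^ j) \<longrightarrow>
            (\<forall>i<r. \<forall>k<n. \<bar>\<Sum>j<r. ((jordan_block r (1::real)) ^\<^sub>m k) $$ (i, j) * x j\<bar> \<le> C)"
      by (rule exI[of _ "real r"]) (auto simp: eqY part1)
    show "\<exists>C'::real. C' > 0 \<and> (\<forall>(n::nat) (x::nat \<Rightarrow> real). n \<ge> 2 \<longrightarrow>
            (\<forall>i<r. \<forall>k<n. \<bar>\<Sum>j<r. ((jordan_block r (1::real)) ^\<^sub>m k) $$ (i, j) * x j\<bar> \<le> 1) \<longrightarrow>
            (\<forall>j<r. \<bar>x j\<bar> \<le> C' / real n ^ j))"
      by (rule exI[of _ C']) (auto simp: eqY C'pos intro!: part2)
  qed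
qed

end
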